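(* Let $\mathcal{C}$ be a clutter and let $f\neq 0$ be a homogeneous binomial in $I(X)$ of the form $f=t_i^b-t^c$ with $b\in\mathbb{N}$, $c\in\mathbb{N}^s$ and $i\notin\mathrm{supp}(c)$. Then (a) $\deg(f)\geq q-1$; and (b) if $\deg(f)=q-1$, then $f=t_i^{q-1}-t_j^{q-1}$ for some $j\neq i$.
   Context: Let $K=\mathbb{F}_q$ be a finite field with $q\neq 2$ elements. A clutter $\mathcal{C}$ with vertex set $\{y_1,\ldots,y_n\}$ is a family of subsets (edges) of this set such that no edge is contained in another; let its edges be $f_1,\ldots,f_s$ ($s\geq 2$) with characteristic vectors $v_i=\sum_{y_j\in f_i}e_j\in\{0,1\}^n$ (these are pairwise distinct). For $x\in K^n$ write $x^{v_i}=\prod_j x_j^{v_{ij}}$. Let $X=\{[(x^{v_1},\ldots,x^{v_s})]\in\mathbb{P}^{s-1}: x\in (K^* )^n\}$, let $S=K[t_1,\ldots,t_s]$ with the standard grading, and let $I(X)$ be the ideal of $S$ generated by the homogeneous polynomials vanishing on $X$. For $c\in\mathbb{N}^s$, $t^c=t_1^{c_1}\cdots t_s^{c_s}$ and $\mathrm{supp}(c)=\{k: c_k\neq 0\}$. *)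

theory Defs
  imports Main
begin

definition clutter :: "nat \<Rightarrow> nat \<Rightarrow> (nat \<Rightarrow> nat set) \<Rightarrow> bool" where
  "clutter n s E \<longleftrightarrow> (\<forall>k<s. E k \<subseteq> {..<n}) \<and>
     (\<forall>k<s. \<forall>l<s. k \<noteq> l \<longrightarrow> \<not> E k \<subseteq> E l)"

(* x to the power v_k = product of x_j over the vertices y_j of the edge f_k *)
definition edge_mono :: "(nat \<Rightarrow> nat set) \<Rightarrow> nat \<Rightarrow> (nat \<Rightarrow> 'a::field) \<Rightarrow> 'a" where
  "edge_mono E k x = (\<Prod>j\<in>E k. x j)"

(* the points of X are (the classes of) (x to the v_1, ..., x to the v_s) with x in the torus *)
definition torus_pt :: "nat \<Rightarrow> (nat \<Rightarrow> 'a::field) \<Rightarrow> bool" where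
  "torus_pt n x \<longleftrightarrow> (\<forall>j<n. x j \<noteq> 0)"

definition mono_eval :: "nat \<Rightarrow> (nat \<Rightarrow> nat) \<Rightarrow> (nat \<Rightarrow> 'a::field) \<Rightarrow> 'a" where
  "mono_eval s a p = (\<Prod>k<s. p k ^ a k)"

(* The homogeneous binomial t_i^b - t^c (with b = |c|) lies in I(X): since it is homogeneous,
   this means it vanishes at every representative of every point of X. *)
definition binom_in_IX ::
  "'a::field itself \<Rightarrow> nat \<Rightarrow> nat \<Rightarrow> (nat \<Rightarrow> nat set) \<Rightarrow> nat \<Rightarrow> nat \<Rightarrow> (nat \<Rightarrow> nat) \<Rightarrow> bool" where
  "binom_in_IX T n s E i b c \<longleftrightarrow>
     (\<forall>x::nat \<Rightarrow> 'a. torus_pt n x \<longrightarrow>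
        edge_mono E i x ^ b = mono_eval s c (\<lambda>k. edge_mono E k x))"

end

theory Submission imports Defs "HOL-Computational_Algebra.Polynomial" begin

lemma root_bound:
  fixes m :: nat
  assumes "m > 0" "\<forall>l::'a::{finite,field}. l \<noteq> 0 \<longrightarrow> l ^ m = 1"
  shows "card (UNIV::'a set) - 1 \<le> m"
proof -
  define p :: "'a poly" where "p = monom 1 m - 1"
  have cm: "coeff p m = 1" using assms(1) by (simp add: p_def coeff_monom)
  hence "p \<noteq> 0" by auto
  have dp: "degree p \<le> m" unfolding p_def
    by (rule degree_diff_le) (auto simp: degree_monom_le)
  have sub: "UNIV - {0} \<subseteq> {x. poly p x = 0}" proof
    fix x assume "x \<in> UNIV - {0::'a}"
    hence "x ^ m = 1" using assms(2) by auto
    thus "x \<in> {x. poly p x = 0}" by (simp add: p_def poly_monom)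
  qed
  have "card (UNIV - {0::'a}) \<le> card {x. poly p x = 0}" by (rule card_mono[OF _ sub]) simp
  also have "\<dots> \<le> degree p" by (rule card_poly_roots_bound) fact
  finally show ?thesis using dp by (simp add: card_Diff_singleton)
qed

lemma prod_if_pow:
  fixes l :: "'a::field" and s :: nat and c :: "nat \<Rightarrow> nat"
  shows "(\<Prod>k<s. (if P k then l else 1) ^ c k) = l ^ (\<Sum>k\<in>{k. k<s \<and> P k}. c k)"
proof -
  have "(\<Prod>k<s. (if P k then l else 1) ^ c k) = (\<Prod>k<s. l ^ (if P k then c k else 0))"
    by (rule prod.cong) auto
  also have "\<dots> = l ^ (\<Sum>k<s. if P k then c k else 0)" by (simp add: power_sum)
  also have "(\<Sum>k<s. if P k then c k else 0) = (\<Sum>k\<in>{k. k<s \<and> P k}. c k)"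
    proof -
    have "{k. k<s \<and> P k} = {k\<in>{..<s}. P k}" by auto
    moreover have "(\<Sum>k<s. if P k then c k else 0) = (\<Sum>k\<in>{k\<in>{..<s}. P k}. c k)"
      by (rule sum.inter_filter[symmetric]) simp
    ultimately show ?thesis by simp
  qed
  finally show ?thesis .
qed

lemma sum_plus_le:
  fixes c :: "nat \<Rightarrow> nat"
  assumes "A \<subseteq> {..<s}" "k0 < s" "k0 \<notin> A"
  shows "sum c A + c k0 \<le> sum c {..<s}"
proof -
  have fA: "finite A" using assms(1) finite_subset by blast
  have "sum c A + c k0 = sum c (insert k0 A)" using fA assms(3) by simp
  also have "\<dots> \<le> sum c {..<s}" by (rule sum_mono2) (use assms in auto)
  finally show ?thesis .
qed

lemma pow_cancel:
  fixes l :: "'a::field"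
  assumes "l \<noteq> 0" "l ^ b = l ^ d" "d \<le> b"
  shows "l ^ (b - d) = 1"
proof -
  have "l ^ d * l ^ (b - d) = l ^ d * 1" using assms(2,3) by (simp add: power_add[symmetric])
  thus ?thesis using assms(1) by simp
qed

theorem lemma3p4:
  fixes n s i b :: nat and E :: "nat \<Rightarrow> nat set" and c :: "nat \<Rightarrow> nat"
  assumes "card (UNIV::'a set) \<noteq> 2"
    and "clutter n s E" and "s \<ge> 2"
    and "i < s" and "\<forall>k. s \<le> k \<longrightarrow> c k = 0" and "c i = 0"
    and "b = (\<Sum>k<s. c k)"
    and "\<not> (b = 0 \<and> (\<forall>k<s. c k = 0))"
    and "binom_in_IX TYPE('a::{finite,field}) n s E i b c"
  shows "b \<ge> card (UNIV::'a set) - 1 \<and>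
         (b = card (UNIV::'a set) - 1 \<longrightarrow>
            (\<exists>j<s. j \<noteq> i \<and> c j = card (UNIV::'a set) - 1 \<and> (\<forall>k. k \<noteq> j \<longrightarrow> c k = 0)))"
proof -
  let ?q = "card (UNIV::'a set)"
  have Esub: "\<And>k. k < s \<Longrightarrow> E k \<subseteq> {..<n}" and Enc: "\<And>k l. k < s \<Longrightarrow> l < s \<Longrightarrow> k \<noteq> l \<Longrightarrow> \<not> E k \<subseteq> E l"
    using assms(2) unfolding clutter_def by auto
  have finE: "\<And>k. k < s \<Longrightarrow> finite (E k)" using Esub finite_subset by blast
  define d where "d j = sum c {k. k < s \<and> j \<in> E k}" for j
  have dsub: "{k. k < s \<and> j \<in> E k} \<subseteq> {..<s}" for j by auto
  have H: "(if j \<in> E i then l else 1) ^ b = l ^ d j" if "j < n" "(l::'a) \<noteq> 0" for j l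
  proof -
    define x where "x = (\<lambda>m. if m = j then l else (1::'a))"
    have tp: "torus_pt n x" using that by (simp add: torus_pt_def x_def)
    have em: "edge_mono E k x = (if j \<in> E k then l else 1)" if "k < s" for k
      unfolding edge_mono_def x_def using prod.delta[OF finE[OF that], of j "\<lambda>_. l"] by simp
    have "edge_mono E i x ^ b = mono_eval s c (\<lambda>k. edge_mono E k x)"
      using assms(9) tp unfolding binom_in_IX_def by blast
    also have "mono_eval s c (\<lambda>k. edge_mono E k x) = (\<Prod>k<s. (if j \<in> E k then l else 1) ^ c k)"
      unfolding mono_eval_def by (rule prod.cong) (auto simp: em)
    also have "\<dots> = l ^ d j" unfolding d_def by (rule prod_if_pow)
    finally show ?thesis using em[OF assms(4)] by simp
  qed
  have dle: "d j \<le> b" for j unfolding d_def assms(7) by (rule sum_mono2) auto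
  have q1: "?q \<ge> 2"
  proof -
    have "{0::'a, 1} \<subseteq> UNIV" by simp
    hence "card {0::'a,1} \<le> ?q" by (rule card_mono[OF finite])
    thus ?thesis by simp
  qed
  have bpos: "b > 0"
  proof (rule ccontr)
    assume "\<not> b > 0"
    hence "b = 0" by simp
    hence "\<forall>k<s. c k = 0" using assms(7) by simp
    thus False using assms(8) \<open>b = 0\<close> by simp
  qed
  obtain k0 where k0: "k0 < s" "c k0 > 0"
  proof -
    have "\<exists>k<s. c k > 0" by (rule ccontr) (use bpos assms(7) in auto)
    thus ?thesis using that by blast
  qed
  have k0i: "k0 \<noteq> i" using k0 assms(6) by auto
  have partA: "b \<ge> ?q - 1"
  proof -
    obtain j where j: "j \<in> E i" "j \<notin> E k0" using Enc[OF assms(4) k0(1)] k0i by auto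
    have jn: "j < n" using Esub[OF assms(4)] j(1) by auto
    have "d j + c k0 \<le> b" unfolding d_def assms(7) by (rule sum_plus_le) (use k0 j in auto)
    hence pos: "b - d j > 0" using k0 by simp
    have "\<forall>l::'a. l \<noteq> 0 \<longrightarrow> l ^ (b - d j) = 1"
    proof (intro allI impI)
      fix l :: 'a assume l: "l \<noteq> 0"
      show "l ^ (b - d j) = 1" by (rule pow_cancel[OF l]) (use H[OF jn l] j(1) dle in auto)
    qed
    from root_bound[OF pos this] show ?thesis by simp
  qed
  moreover have "b = ?q - 1 \<longrightarrow> (\<exists>j<s. j \<noteq> i \<and> c j = ?q - 1 \<and> (\<forall>k. k \<noteq> j \<longrightarrow> c k = 0))"
  proof
    assume bq: "b = ?q - 1"
    have d01: "d j = 0 \<or> d j = b" if "j < n" for j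
    proof (cases "j \<in> E i")
      case True
      have "\<forall>l::'a. l \<noteq> 0 \<longrightarrow> l ^ (b - d j) = 1"
      proof (intro allI impI)
        fix l :: 'a assume l: "l \<noteq> 0"
        show "l ^ (b - d j) = 1" by (rule pow_cancel[OF l]) (use H[OF that l] True dle in auto)
      qed
      hence "b - d j > 0 \<Longrightarrow> ?q - 1 \<le> b - d j" using root_bound by blast
      thus ?thesis using bq dle[of j] by linarith
    next
      case False
      have "\<forall>l::'a. l \<noteq> 0 \<longrightarrow> l ^ d j = 1"
        using H[OF that] False by simp
      hence "d j > 0 \<Longrightarrow> ?q - 1 \<le> d j" using root_bound by blast
      thus ?thesis using bq dle[of j] by linarith
    qed
    have others: "c k = 0" if "k \<noteq> k0" for k
    proof (rule ccontr)
      assume ck: "c k \<noteq> 0"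
      hence ks: "k < s" using assms(5) by (meson not_less)
      have "E k0 \<subseteq> E k"
      proof
        fix j assume jE: "j \<in> E k0"
        have jn: "j < n" using Esub[OF k0(1)] jE by auto
        have "c k0 \<le> d j" unfolding d_def by (rule member_le_sum) (use k0 jE in auto)
        hence djb: "d j = b" using d01[OF jn] k0 by auto
        show "j \<in> E k"
        proof (rule ccontr)
          assume "j \<notin> E k"
          hence "d j + c k \<le> b" unfolding d_def assms(7) by (intro sum_plus_le) (use ks in auto)
          thus False using djb ck by simp
        qed
      qed
      thus False using Enc[OF k0(1) ks] that by auto
    qed
    have "b = c k0 + sum c ({..<s} - {k0})" unfolding assms(7)
      by (rule sum.remove) (use k0 in auto)
    also have "sum c ({..<s} - {k0}) = 0" by (rule sum.neutral) (use others in auto)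
    finally have "c k0 = ?q - 1" using bq by simp
    thus "\<exists>j<s. j \<noteq> i \<and> c j = ?q - 1 \<and> (\<forall>k. k \<noteq> j \<longrightarrow> c k = 0)"
      using k0 k0i others by blast
  qed
  ultimately show ?thesis by blast
qed

end
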